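(* Let $n\ge 1$ and let $p=p_1\cdots p_n$ be a permutation of $\{1,\dots,n\}$ with $p_n=1$. Then the following are equivalent: (A) $p$ is strongly 312-avoiding; (B) there is an integer $k$ with $n/2\le k\le n$ such that $p=(k+1)(k+2)\cdots n\; k(k-1)\cdots 2\,1$, i.e. $p$ lists the $n-k$ largest values in increasing order followed by the $k$ smallest values in decreasing order.
   Context: Permutations are written in one-line notation $p=p_1\cdots p_n$ with $p_i=p(i)$. $p$ contains a pattern $q=q_1\cdots q_m$ if there are indices $i_1<\cdots<i_m$ with $p_{i_r}<p_{i_s}$ iff $q_r<q_s$; otherwise $p$ avoids $q$. $p^2(i)=p(p(i))$. A permutation $p$ is strongly $q$-avoiding if both $p$ and $p^2$ avoid $q$. *)

theory Defs
  imports "HOL-Combinatorics.Permutations"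
begin

text \<open>A permutation of {1..n} is a function p :: nat => nat with p permutes {1..n};
  its one-line notation is p 1, ..., p n. A pattern q = q_1 ... q_m is given as a list
  [q_1, ..., q_m].\<close>

definition contains_pattern :: "nat \<Rightarrow> (nat \<Rightarrow> nat) \<Rightarrow> nat list \<Rightarrow> bool" where
  "contains_pattern n p q \<longleftrightarrow>
     (\<exists>ix :: nat list. length ix = length q \<and> sorted_wrt (<) ix \<and> set ix \<subseteq> {1..n} \<and>
        (\<forall>r < length q. \<forall>s < length q. (p (ix ! r) < p (ix ! s) \<longleftrightarrow> q ! r < q ! s)))"

definition avoids_pattern :: "nat \<Rightarrow> (nat \<Rightarrow> nat) \<Rightarrow> nat list \<Rightarrow> bool" where
  "avoids_pattern n p q \<longleftrightarrow> \<not> contains_pattern n p q"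

definition strongly_avoids :: "nat \<Rightarrow> (nat \<Rightarrow> nat) \<Rightarrow> nat list \<Rightarrow> bool" where
  "strongly_avoids n p q \<longleftrightarrow> avoids_pattern n p q \<and> avoids_pattern n (p \<circ> p) q"

end

theory Submission
  imports Defs
begin

lemma c312:
  "contains_pattern n f [3,1,2] \<longleftrightarrow>
     (\<exists>i j l. 1 \<le> i \<and> i < j \<and> j < l \<and> l \<le> n \<and> f j < f l \<and> f l < f i)"
proof
  assume "contains_pattern n f [3,1,2]"
  then obtain ix :: "nat list" where ix0: "length ix = length [3::nat,1,2]" "sorted_wrt (<) ix" "set ix \<subseteq> {1..n}"
    and cmp0: "\<forall>r<length [3::nat,1,2]. \<forall>s<length [3::nat,1,2]. (f (ix ! r) < f (ix ! s) \<longleftrightarrow> [3::nat,1,2] ! r < [3,1,2] ! s)"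
    unfolding contains_pattern_def by blast
  have ix: "length ix = 3" "sorted_wrt (<) ix" "set ix \<subseteq> {1..n}" using ix0 by auto
  have cmp: "\<forall>r<3. \<forall>s<3. (f (ix ! r) < f (ix ! s) \<longleftrightarrow> [3::nat,1,2] ! r < [3,1,2] ! s)"
    using cmp0 by simp
  have s01: "ix ! 0 < ix ! 1" and s12: "ix ! 1 < ix ! 2"
    using ix(1,2) by (auto simp: sorted_wrt_iff_nth_less)
  have m0: "ix ! 0 \<in> {1..n}" and m2: "ix ! 2 \<in> {1..n}"
  proof -
    have "ix ! 0 \<in> set ix" "ix ! 2 \<in> set ix" using ix(1) by (auto intro!: nth_mem)
    then show "ix ! 0 \<in> {1..n}" "ix ! 2 \<in> {1..n}" using ix(3) by auto
  qed
  have c1: "f (ix ! 1) < f (ix ! 2)" using cmp by auto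
  have c2: "f (ix ! 2) < f (ix ! 0)" using cmp by auto
  show "\<exists>i j l. 1 \<le> i \<and> i < j \<and> j < l \<and> l \<le> n \<and> f j < f l \<and> f l < f i"
    using s01 s12 m0 m2 c1 c2 by (intro exI[of _ "ix!0"] exI[of _ "ix!1"] exI[of _ "ix!2"]) auto
next
  assume "\<exists>i j l. 1 \<le> i \<and> i < j \<and> j < l \<and> l \<le> n \<and> f j < f l \<and> f l < f i"
  then obtain i j l where h: "1 \<le> i" "i < j" "j < l" "l \<le> n" "f j < f l" "f l < f i" by blast
  have "\<forall>r<3. \<forall>s<3. (f ([i,j,l] ! r) < f ([i,j,l] ! s) \<longleftrightarrow> [3::nat,1,2] ! r < [3,1,2] ! s)"
    using h by (auto simp: numeral_3_eq_3 less_Suc_eq)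
  then show "contains_pattern n f [3,1,2]"
    unfolding contains_pattern_def using h
    by (intro exI[of _ "[i,j,l]"]) auto
qed

lemma inc_gap:
  fixes f :: "nat \<Rightarrow> nat"
  assumes mono: "\<And>a b. lo \<le> a \<Longrightarrow> a < b \<Longrightarrow> b \<le> hi \<Longrightarrow> f a < f b"
    and "lo \<le> a" "a \<le> b" "b \<le> hi"
  shows "f a + (b - a) \<le> f b"
  using assms(3,4)
proof (induction b)
  case 0 then show ?case by simp
next
  case (Suc b)
  show ?case
  proof (cases "a = Suc b")
    case True then show ?thesis by simp
  next
    case False
    then have "a \<le> b" using Suc.prems by simp
    then have "f a + (b - a) \<le> f b" using Suc by simp
    moreover have "f b < f (Suc b)" using mono[of b "Suc b"] \<open>a \<le> b\<close> assms(2) Suc.prems by simp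
    ultimately show ?thesis using \<open>a \<le> b\<close> by simp
  qed
qed

lemma dec_gap:
  fixes f :: "nat \<Rightarrow> nat"
  assumes mono: "\<And>a b. lo \<le> a \<Longrightarrow> a < b \<Longrightarrow> b \<le> hi \<Longrightarrow> f b < f a"
    and "lo \<le> a" "a \<le> b" "b \<le> hi"
  shows "f b + (b - a) \<le> f a"
  using assms(3,4)
proof (induction b)
  case 0 then show ?case by simp
next
  case (Suc b)
  show ?case
  proof (cases "a = Suc b")
    case True then show ?thesis by simp
  next
    case False
    then have "a \<le> b" using Suc.prems by simp
    then have "f b + (b - a) \<le> f a" using Suc by simp
    moreover have "f (Suc b) < f b" using mono[of b "Suc b"] \<open>a \<le> b\<close> assms(2) Suc.prems by simp
    ultimately show ?thesis using \<open>a \<le> b\<close> by simp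
  qed
qed

theorem theorem3p1:
  fixes n :: nat and p :: "nat \<Rightarrow> nat"
  assumes "n \<ge> 1" and "p permutes {1..n}" and "p n = 1"
  shows "strongly_avoids n p [3,1,2] \<longleftrightarrow>
         (\<exists>k::nat. n \<le> 2 * k \<and> k \<le> n \<and>
            (\<forall>i \<in> {1..n}. p i = (if i \<le> n - k then k + i else n + 1 - i)))"
proof -
  have inj: "\<And>x y. p x = p y \<longleftrightarrow> x = y"
    using permutes_inj[OF assms(2)] by (simp add: inj_eq)
  have rng: "\<And>i. i \<in> {1..n} \<Longrightarrow> p i \<in> {1..n}"
    using permutes_in_image[OF assms(2)] by blast
  have ex: "\<And>y. y \<in> {1..n} \<Longrightarrow> \<exists>x\<in>{1..n}. p x = y"
  proof -
    fix y assume y: "y \<in> {1..n}"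
    obtain x where "p x = y" using permutes_surj[OF assms(2)] by (metis surjD)
    then show "\<exists>x\<in>{1..n}. p x = y" using y permutes_in_image[OF assms(2)] by blast
  qed
  show ?thesis
  proof
    assume SA: "strongly_avoids n p [3,1,2]"
    have N1: "\<And>i j l. 1 \<le> i \<Longrightarrow> i < j \<Longrightarrow> j < l \<Longrightarrow> l \<le> n \<Longrightarrow> \<not> (p j < p l \<and> p l < p i)"
      using SA unfolding strongly_avoids_def avoids_pattern_def c312 by blast
    have N2: "\<And>i j l. 1 \<le> i \<Longrightarrow> i < j \<Longrightarrow> j < l \<Longrightarrow> l \<le> n \<Longrightarrow>
          \<not> (p (p j) < p (p l) \<and> p (p l) < p (p i))"
      using SA unfolding strongly_avoids_def avoids_pattern_def c312 by auto
    show "\<exists>k::nat. n \<le> 2 * k \<and> k \<le> n \<and>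
            (\<forall>i \<in> {1..n}. p i = (if i \<le> n - k then k + i else n + 1 - i))"
    proof (cases "n = 1")
      case True
      then show ?thesis using assms(3) by (intro exI[of _ 1]) auto
    next
      case False
      then have n2: "n \<ge> 2" using assms(1) by simp
      obtain t where t: "t \<in> {1..n}" "p t = n" using ex[of n] n2 by auto
      have tn: "t < n" using t assms(3) n2 by (cases "t = n") auto
      define m where "m = p 1"
      have m_rng: "1 \<le> m" "m \<le> n" using rng[of 1] n2 unfolding m_def by auto
      have m_ne1: "m \<noteq> 1" using inj[of 1 n] assms(3) n2 unfolding m_def by auto
      have bdec: "\<And>j l. t < j \<Longrightarrow> j < l \<Longrightarrow> l \<le> n \<Longrightarrow> p l < p j"
      proof -
        fix j l assume h: "t < j" "j < l" "l \<le> n"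
        have "p l \<noteq> n" using inj[of l t] t h by auto
        moreover have "p l \<le> n" using rng[of l] h t by auto
        moreover have "p j \<noteq> p l" using inj[of j l] h by auto
        ultimately show "p l < p j" using N1[of t j l] h t by auto
      qed
      have V: "\<And>a b. 1 < a \<Longrightarrow> a < b \<Longrightarrow> b \<le> n \<Longrightarrow> p a < m \<Longrightarrow> p b < m \<Longrightarrow> p b < p a"
      proof -
        fix a b assume h: "1 < a" "a < b" "b \<le> n" "p a < m" "p b < m"
        have "p a \<noteq> p b" using inj[of a b] h by auto
        then show "p b < p a" using N1[of 1 a b] h unfolding m_def by auto
      qed
      have C2: "\<And>i l. 1 \<le> i \<Longrightarrow> i < t \<Longrightarrow> t < l \<Longrightarrow> l \<le> n \<Longrightarrow> p (p i) < p (p l)"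
      proof -
        fix i l assume h: "1 \<le> i" "i < t" "t < l" "l \<le> n"
        have pt: "p (p t) = 1" using t assms(3) by simp
        have "p (p l) \<noteq> 1"
        proof
          assume "p (p l) = 1"
          then have "p (p l) = p n" using assms(3) by simp
          then have "p l = p t" using inj t by simp
          then show False using inj h by simp
        qed
        moreover have "p (p l) \<ge> 1" using rng[of "p l"] rng[of l] h t by auto
        moreover have "p (p l) \<noteq> p (p i)" using inj h by simp
        ultimately show "p (p i) < p (p l)" using N2[of i t l] h pt by auto
      qed
      have mt: "t < m"
      proof (cases "t = 1")
        case True then show ?thesis using t tn unfolding m_def by simp
      next
        case False
        have "inj_on (\<lambda>i. p (p i)) {1..t}" using inj by (auto simp: inj_on_def)
        moreover have "(\<lambda>i. p (p i)) ` {1..t} \<subseteq> {1..m-1}"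
        proof
          fix y assume "y \<in> (\<lambda>i. p (p i)) ` {1..t}"
          then obtain i where i: "i \<in> {1..t}" "y = p (p i)" by auto
          show "y \<in> {1..m-1}"
          proof (cases "i = t")
            case True then show ?thesis using i t assms(3) m_rng m_ne1 by auto
          next
            case False
            then have "p (p i) < p (p n)" using C2[of i n] i tn by auto
            moreover have "p (p i) \<ge> 1" using rng[of "p i"] rng[of i] i t by auto
            ultimately show ?thesis using i assms(3) unfolding m_def by auto
          qed
        qed
        ultimately have "card {1..t} \<le> card {1..m-1}" by (intro card_inj_on_le) auto
        then show ?thesis using m_rng m_ne1 by simp
      qed
      define u where "u = p (t+1)"
      have u_rng: "1 \<le> u" "u \<le> n" using rng[of "t+1"] tn unfolding u_def by auto
      have u_le: "u < m"
      proof -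
        have "u \<noteq> m" using inj[of "t+1" 1] t unfolding u_def m_def by auto
        moreover have "\<not> m < u"
        proof
          assume mu: "m < u"
          have "t \<noteq> 1" using mu m_rng u_rng t unfolding m_def by auto
          then have "p (p 1) < p (p (t+1))" using C2[of 1 "t+1"] t tn by auto
          moreover have "p u < p m" using bdec[of m u] mt mu u_rng by auto
          ultimately show False unfolding m_def u_def by simp
        qed
        ultimately show ?thesis by simp
      qed
      have u_ge: "m - 1 \<le> u"
      proof (rule ccontr)
        assume um: "\<not> m - 1 \<le> u"
        obtain j0 where j0: "j0 \<in> {1..n}" "p j0 = m - 1" using ex[of "m-1"] m_rng m_ne1 by force
        have "j0 \<noteq> 1" using j0 m_ne1 m_rng unfolding m_def by auto
        moreover have "j0 \<noteq> t" using j0 t m_rng by auto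
        moreover have "\<not> t < j0"
        proof
          assume "t < j0"
          then show False
          proof (cases "j0 = t+1")
            case True then show False using um j0 unfolding u_def by simp
          next
            case False
            then have "p j0 < u" using bdec[of "t+1" j0] \<open>t < j0\<close> j0 unfolding u_def by auto
            then show False using um j0 by simp
          qed
        qed
        ultimately have j0t: "1 < j0" "j0 < t" using j0 by auto
        obtain s where s: "s \<in> {1..n}" "p s = t" using ex[of t] t by auto
        obtain l where l: "l \<in> {1..n}" "p l = j0" using ex[of j0] j0 by auto
        have "s \<noteq> 1" using s mt unfolding m_def by auto
        have "l \<noteq> 1" using l j0t mt unfolding m_def by auto
        have "l \<noteq> s" using l s j0t by auto
        have sl: "s < l"
        proof (rule ccontr)
          assume "\<not> s < l"
          then have "l < s" using \<open>l \<noteq> s\<close> by simp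
          then have "p s < p l" using V[of l s] \<open>l \<noteq> 1\<close> l s j0t mt by auto
          then show False using s l j0t by simp
        qed
        have "l \<noteq> n" using l assms(3) j0t by auto
        have "m \<noteq> n" using inj[of 1 t] t j0t unfolding m_def by auto
        have "\<not> (p (p l) < p (p n) \<and> p (p n) < p (p s))"
          using N2[of s l n] sl s l \<open>l \<noteq> n\<close> \<open>s \<noteq> 1\<close> by auto
        then show False using l j0 s t assms(3) \<open>m \<noteq> n\<close> m_rng m_ne1 unfolding m_def by auto
      qed
      have u_eq: "p (t+1) = m - 1" using u_le u_ge unfolding u_def by simp
      have Lbig: "\<And>i. 1 \<le> i \<Longrightarrow> i < t \<Longrightarrow> m \<le> p i"
      proof (rule ccontr)
        fix i assume h: "1 \<le> i" "i < t" "\<not> m \<le> p i"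
        then have "i \<noteq> 1" unfolding m_def by auto
        then have "p (t+1) < p i" using V[of i "t+1"] h tn u_eq m_ne1 m_rng by auto
        then show False using h u_eq by simp
      qed
      have Ltop: "\<And>i. 1 \<le> i \<Longrightarrow> i < t \<Longrightarrow> p i < n"
      proof -
        fix i assume h: "1 \<le> i" "i < t"
        have "p i \<noteq> n" using inj[of i t] t h by auto
        then show "p i < n" using rng[of i] h t by auto
      qed
      have Ainc: "\<And>a b. 1 \<le> a \<Longrightarrow> a < b \<Longrightarrow> b \<le> t - 1 \<Longrightarrow> p a < p b"
      proof -
        fix a b assume h: "1 \<le> a" "a < b" "b \<le> t - 1"
        have pb: "m < p b"
        proof -
          have "p b \<noteq> m" using inj[of b 1] h unfolding m_def by auto
          moreover have "b < t" using h by simp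
          ultimately show ?thesis using Lbig[of b] h by auto
        qed
        show "p a < p b"
        proof (cases "a = 1")
          case True then show ?thesis using pb unfolding m_def by simp
        next
          case False
          show ?thesis
          proof (rule ccontr)
            assume "\<not> p a < p b"
            moreover have "p a \<noteq> p b" using inj h by simp
            ultimately have ab: "p b < p a" by simp
            have at: "a < t" "b < t" using h by auto
            have pan: "p a < n" "p b < n" using Ltop[of a] Ltop[of b] at h by auto
            have "p (p a) < p (p b)" using bdec[of "p b" "p a"] ab pb mt pan by simp
            moreover have "p (p b) < p m" using bdec[of m "p b"] pb mt pan by simp
            moreover have "b \<le> n" using at tn by simp
            ultimately show False using N2[of 1 a b] h False unfolding m_def by auto
          qed
        qed
      qed
      have Rdec: "\<And>a b. t + 1 \<le> a \<Longrightarrow> a < b \<Longrightarrow> b \<le> n \<Longrightarrow> p b < p a"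
        using bdec by simp
      have Rlow: "\<And>j. t < j \<Longrightarrow> j \<le> n \<Longrightarrow> n + 1 - j \<le> p j"
      proof -
        fix j assume h: "t < j" "j \<le> n"
        have "p n + (n - j) \<le> p j" using dec_gap[of "t+1" n p j n, OF Rdec] h by auto
        then show "n + 1 - j \<le> p j" using assms(3) h by simp
      qed
      have Rhigh: "\<And>j. t < j \<Longrightarrow> j \<le> n \<Longrightarrow> p j + (j - (t+1)) \<le> m - 1"
      proof -
        fix j assume h: "t < j" "j \<le> n"
        show "p j + (j - (t+1)) \<le> m - 1" using dec_gap[of "t+1" n p "t+1" j, OF Rdec] h u_eq by auto
      qed
      have Llow: "\<And>i. 1 \<le> i \<Longrightarrow> i < t \<Longrightarrow> m + (i - 1) \<le> p i"
        using inc_gap[of 1 "t-1" p 1, OF Ainc] unfolding m_def by auto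
      have Lhigh: "\<And>i. 1 \<le> i \<Longrightarrow> i < t \<Longrightarrow> p i + (t - 1 - i) \<le> n - 1"
      proof -
        fix i assume h: "1 \<le> i" "i < t"
        have "p i + (t - 1 - i) \<le> p (t - 1)" using inc_gap[of 1 "t-1" p i "t-1", OF Ainc] h by auto
        moreover have "p (t-1) < n" using Ltop[of "t-1"] h by auto
        ultimately show "p i + (t - 1 - i) \<le> n - 1" by simp
      qed
      have mt1: "m + t \<le> n + 1"
      proof (cases "t = 1")
        case True then show ?thesis using t m_rng by simp
      next
        case False
        then have "1 \<le> t - 1" "t - 1 < t" using t by auto
        then have "m + (t - 1 - 1) \<le> p (t-1)" "p (t-1) < n" using Llow[of "t-1"] Ltop[of "t-1"] by auto
        then show ?thesis using \<open>1 \<le> t - 1\<close> by linarith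
      qed
      have mt2: "n + 1 \<le> m + t" using Rhigh[of n] Rlow[of n] tn m_rng assms(3) by auto
      have mtn: "m + t = n + 1" using mt1 mt2 by simp
      show ?thesis
      proof (intro exI[of _ "m - 1"] conjI ballI)
        show "n \<le> 2 * (m - 1)" using mtn mt by simp
        show "m - 1 \<le> n" using m_rng by simp
        fix i assume i: "i \<in> {1..n}"
        have nk: "n - (m - 1) = t" using mtn m_rng by simp
        show "p i = (if i \<le> n - (m - 1) then m - 1 + i else n + 1 - i)"
        proof (cases "i < t")
          case True
          then show ?thesis using Llow[of i] Lhigh[of i] i nk mtn m_rng by auto
        next
          case False
          show ?thesis
          proof (cases "i = t")
            case True then show ?thesis using t nk mtn m_rng by auto
          next
            case False
            then have "t < i" using \<open>\<not> i < t\<close> by simp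
            then show ?thesis using Rlow[of i] Rhigh[of i] i nk mtn m_rng by auto
          qed
        qed
      qed
    qed
  next
    assume "\<exists>k::nat. n \<le> 2 * k \<and> k \<le> n \<and>
            (\<forall>i \<in> {1..n}. p i = (if i \<le> n - k then k + i else n + 1 - i))"
    then obtain k where k: "n \<le> 2 * k" "k \<le> n"
      and pf: "\<And>i. i \<in> {1..n} \<Longrightarrow> p i = (if i \<le> n - k then k + i else n + 1 - i)" by blast
    have P1: "\<And>x. x \<in> {1..n} \<Longrightarrow> (x + k \<le> n \<and> p x = k + x) \<or> (n < x + k \<and> p x + x = n + 1)"
    proof -
      fix x assume x: "x \<in> {1..n}"
      show "(x + k \<le> n \<and> p x = k + x) \<or> (n < x + k \<and> p x + x = n + 1)"
      proof (cases "x + k \<le> n")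
        case True then show ?thesis using pf[OF x] by simp
      next
        case False then show ?thesis using pf[OF x] x by auto
      qed
    qed
    have P2: "\<And>x. x \<in> {1..n} \<Longrightarrow> (x + k \<le> n \<and> p (p x) + x + k = n + 1)
        \<or> (n < x + k \<and> x \<le> k \<and> p (p x) = x) \<or> (k < x \<and> p (p x) + x = k + n + 1)"
    proof -
      fix x assume x: "x \<in> {1..n}"
      have y: "p x \<in> {1..n}" using rng[OF x] .
      from P1[OF x] show "(x + k \<le> n \<and> p (p x) + x + k = n + 1)
        \<or> (n < x + k \<and> x \<le> k \<and> p (p x) = x) \<or> (k < x \<and> p (p x) + x = k + n + 1)"
      proof
        assume h: "x + k \<le> n \<and> p x = k + x"
        from P1[OF y] show ?thesis
        proof
          assume "p x + k \<le> n \<and> p (p x) = k + p x" then show ?thesis using h k x by simp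
        next
          assume "n < p x + k \<and> p (p x) + p x = n + 1" then show ?thesis using h by simp
        qed
      next
        assume h: "n < x + k \<and> p x + x = n + 1"
        from P1[OF y] show ?thesis
        proof
          assume "p x + k \<le> n \<and> p (p x) = k + p x" then show ?thesis using h by simp
        next
          assume "n < p x + k \<and> p (p x) + p x = n + 1" then show ?thesis using h by simp
        qed
      qed
    qed
    have A1: "\<not> (\<exists>i j l. 1 \<le> i \<and> i < j \<and> j < l \<and> l \<le> n \<and> p j < p l \<and> p l < p i)"
    proof clarify
      fix i j l assume h: "1 \<le> i" "i < j" "j < l" "l \<le> n" "p j < p l" "p l < p i"
      have "i \<in> {1..n}" "j \<in> {1..n}" "l \<in> {1..n}" using h by auto
      from P1[OF this(1)] P1[OF this(2)] P1[OF this(3)] show False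
        using h k by (elim disjE conjE) linarith+
    qed
    have A2: "\<not> (\<exists>i j l. 1 \<le> i \<and> i < j \<and> j < l \<and> l \<le> n \<and>
        (p \<circ> p) j < (p \<circ> p) l \<and> (p \<circ> p) l < (p \<circ> p) i)"
    proof clarify
      fix i j l assume h: "1 \<le> i" "i < j" "j < l" "l \<le> n"
        "(p \<circ> p) j < (p \<circ> p) l" "(p \<circ> p) l < (p \<circ> p) i"
      have h2: "p (p j) < p (p l)" "p (p l) < p (p i)" using h by auto
      have "i \<in> {1..n}" "j \<in> {1..n}" "l \<in> {1..n}" using h by auto
      from P2[OF this(1)] P2[OF this(2)] P2[OF this(3)] show False
        using h(1-4) h2 k by (elim disjE conjE) linarith+
    qed
    show "strongly_avoids n p [3,1,2]"
      unfolding strongly_avoids_def avoids_pattern_def c312 using A1 A2 by blast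
  qed
qed

end
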